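(* Let $D$ be an oriented graph and let $u$ be a vertex of $D$ of maximum score. Then every vertex $v \neq u$ of $D$ is weakly reachable within two steps from $u$.
   Context: An oriented graph is a digraph with no loops and no pair of symmetric arcs. For vertices $u,v$ write $u(1\text{-}0)v$ if there is an arc from $u$ to $v$, $u(0\text{-}1)v$ if there is an arc from $v$ to $u$, and $u(0\text{-}0)v$ if there is no arc between $u$ and $v$. If $D$ has $n$ vertices, the score of a vertex $v$ is $s(v) = n-1+d^+(v)-d^-(v)$, where $d^+(v), d^-(v)$ are the out- and indegree of $v$; equivalently $s(v)=2d^+(v)+d^*(v)$ where $d^*(v)$ is the number of vertices $w$ with $v(0\text{-}0)w$. A vertex $v$ is weakly reachable within two steps from $u$ if $u(1\text{-}0)v$, or $u(0\text{-}0)v$, or for some vertex $w$ one has $u(1\text{-}0)w(1\text{-}0)v$, or $u(1\text{-}0)w(0\text{-}0)v$, or $u(0\text{-}0)w(1\text{-}0)v$. *)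

theory Defs
  imports Main
begin

definition oriented_graph :: "'a set \<Rightarrow> ('a \<Rightarrow> 'a \<Rightarrow> bool) \<Rightarrow> bool" where
  "oriented_graph V A \<longleftrightarrow> finite V \<and> (\<forall>u v. A u v \<longrightarrow> u \<in> V \<and> v \<in> V)
     \<and> (\<forall>u. \<not> A u u) \<and> (\<forall>u v. A u v \<longrightarrow> \<not> A v u)"

definition outdeg :: "'a set \<Rightarrow> ('a \<Rightarrow> 'a \<Rightarrow> bool) \<Rightarrow> 'a \<Rightarrow> nat" where
  "outdeg V A v = card {w \<in> V. A v w}"

definition indeg :: "'a set \<Rightarrow> ('a \<Rightarrow> 'a \<Rightarrow> bool) \<Rightarrow> 'a \<Rightarrow> nat" where
  "indeg V A v = card {w \<in> V. A w v}"

definition score :: "'a set \<Rightarrow> ('a \<Rightarrow> 'a \<Rightarrow> bool) \<Rightarrow> 'a \<Rightarrow> int" where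
  "score V A v = int (card V) - 1 + int (outdeg V A v) - int (indeg V A v)"

definition nonadj :: "'a set \<Rightarrow> ('a \<Rightarrow> 'a \<Rightarrow> bool) \<Rightarrow> 'a \<Rightarrow> 'a \<Rightarrow> bool" where
  "nonadj V A u v \<longleftrightarrow> u \<in> V \<and> v \<in> V \<and> u \<noteq> v \<and> \<not> A u v \<and> \<not> A v u"

definition weakly_reachable2 :: "'a set \<Rightarrow> ('a \<Rightarrow> 'a \<Rightarrow> bool) \<Rightarrow> 'a \<Rightarrow> 'a \<Rightarrow> bool" where
  "weakly_reachable2 V A u v \<longleftrightarrow> A u v \<or> nonadj V A u v \<or>
     (\<exists>w\<in>V. (A u w \<and> A w v) \<or> (A u w \<and> nonadj V A w v) \<or> (nonadj V A u w \<and> A w v))"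

end

theory Submission
  imports Defs
begin

theorem theorem4:
  fixes V :: "'a set" and A :: "'a \<Rightarrow> 'a \<Rightarrow> bool" and u :: 'a
  assumes "oriented_graph V A"
    and "u \<in> V"
    and "\<forall>x\<in>V. score V A x \<le> score V A u"
  shows "\<forall>v\<in>V. v \<noteq> u \<longrightarrow> weakly_reachable2 V A u v"
proof (intro ballI impI, rule ccontr)
  fix v assume vV: "v \<in> V" and vu: "v \<noteq> u" and nw: "\<not> weakly_reachable2 V A u v"
  have fin: "finite V" and inV: "\<And>a b. A a b \<Longrightarrow> a \<in> V \<and> b \<in> V"
    and irr: "\<And>a. \<not> A a a" and asym: "\<And>a b. A a b \<Longrightarrow> \<not> A b a"
    using assms(1) unfolding oriented_graph_def by blast+
  have Avu: "A v u" using nw vV vu assms(2) unfolding weakly_reachable2_def nonadj_def by blast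
  have o1: "A v w" if "A u w" for w
  proof -
    have "w \<in> V" using inV that by blast
    then show ?thesis using nw that vV vu assms(2) Avu irr asym
      unfolding weakly_reachable2_def nonadj_def by metis
  qed
  have i1: "A w u" if "A w v" for w
  proof -
    have wV: "w \<in> V" using inV that by blast
    have "w \<noteq> u" using that Avu asym by blast
    moreover have "\<not> A u w" using o1 that asym by blast
    moreover have "\<not> nonadj V A u w" using nw wV that unfolding weakly_reachable2_def by blast
    ultimately show ?thesis using wV assms(2) unfolding nonadj_def by blast
  qed
  have s1: "insert u {w \<in> V. A u w} \<subseteq> {w \<in> V. A v w}" using o1 Avu assms(2) by blast
  have "card (insert u {w \<in> V. A u w}) \<le> card {w \<in> V. A v w}"
    by (rule card_mono) (use fin s1 in auto)
  moreover have "card (insert u {w \<in> V. A u w}) = Suc (card {w \<in> V. A u w})"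
    using fin irr by simp
  ultimately have od: "outdeg V A u + 1 \<le> outdeg V A v" unfolding outdeg_def by simp
  have s2: "insert v {w \<in> V. A w v} \<subseteq> {w \<in> V. A w u}" using i1 Avu vV by blast
  have "card (insert v {w \<in> V. A w v}) \<le> card {w \<in> V. A w u}"
    by (rule card_mono) (use fin s2 in auto)
  moreover have "card (insert v {w \<in> V. A w v}) = Suc (card {w \<in> V. A w v})"
    using fin irr by simp
  ultimately have id: "indeg V A v + 1 \<le> indeg V A u" unfolding indeg_def by simp
  have "score V A v \<le> score V A u" using assms(3) vV by blast
  then show False using od id unfolding score_def by simp
qed

end
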